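(* Consider the Decaying-$\epsilon$-FOCuS procedure (described in the context) on $M>1$ streams with detection threshold $\lambda>0$, where stream 1 has a change-point at $\nu=0$ (so every observation of stream 1 is $\mathcal{N}(\mu_1,1)$ with $\mu_1\ne0$, and all other observations are $\mathcal{N}(0,1)$). For $t\ge0$ let $H_t=\{\max_{m\in[M]\setminus\{1\}}T_t^{(m)}\ge T_t^{(1)}\}$. Then $\sum_{t=0}^\infty \mathbb{P}_{M,0}(H_t)<\infty$.
   Context: Setting: there are $M$ independent data streams. At each time $t=1,2,\dots$ an agent selects one stream $A_t\in\{1,\dots,M\}$ and observes one value $X_t\in\mathbb{R}$ from it. The $i$-th observation taken from stream $m$ is denoted $X_i^{(m)}$. Pre-change observations are $\mathcal{N}(0,1)$. Stream 1 has a change-point $\nu$: if $A_t=1$ and $t>\nu$ then $X_t\sim\mathcal{N}(\mu_1,1)$ with $\mu_1\neq0$; otherwise $X_t\sim\mathcal{N}(0,1)$; observations are conditionally independent given the selections. $\mathbb{P}_{M,\nu}$ denotes probability for $M$ streams with change at $\nu$ in stream 1. $\mathcal{F}_t=\sigma(A_1,X_1,\dots,A_t,X_t)$. The sampling process and statistics are defined for all $t\ge 0$ (the sampling rule does not depend on the threshold). Decaying-$\epsilon$-FOCuS: let $N_t^{(m)}$ be the number of times stream $m$ was selected up to and including time $t$. The local GLR statistic is $T_t^{(m)}=\max_{0\le k<N_t^{(m)}}\frac{(\sum_{i=k+1}^{N_t^{(m)}}X_i^{(m)})^2}{2(N_t^{(m)}-k)}$ (and $T_t^{(m)}=0$ if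 $N_t^{(m)}=0$); $T_t=\max_m T_t^{(m)}$ and $M_t=\arg\max_m T_t^{(m)}$. The local change-point estimate $\hat\nu_t^{(m)}$ is the time at which stream $m$'s $\hat k$-th observation was taken, where $\hat k$ is the maximizing index $k$ in $T_t^{(m)}$ (time $0$ if $\hat k=0$ or $N_t^{(m)}=0$); the global estimate is $\hat\nu_t=\hat\nu_t^{(M_t)}$; ties are broken uniformly at random. Initially $\hat\nu_0=0$, $M_0$ uniform on $[M]$. At time $t$, set $\epsilon_t=\min\{1, M/\max(1,t-\hat\nu_{t-1})^{1/3}\}$, draw $G_t\sim\mathrm{Bernoulli}(\epsilon_t)$ (conditionally on $\mathcal{F}_{t-1}$); if $G_t=1$ choose $A_t$ uniformly from $[M]$, otherwise $A_t=M_{t-1}$; then observe $X_t$ and update the statistics. The procedure stops at $\tau=\inf\{t\ge 1: T_t\ge\lambda\}$. *)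

theory Defs
  imports "HOL-Probability.Probability"
begin

text \<open>Per-time randomness omega t = (z, ug, ua, um, uk):
  z ~ N(0,1) (observation noise at time t), ug ~ U[0,1] (Bernoulli(eps_t) draw: G_t = (ug < eps_t)),
  ua ~ U[0,1] (uniform stream choice at time t when exploring),
  um, uk ~ U[0,1] (uniform tie breaking for M_t and for the local change-point index at time t).\<close>

type_synonym sample = "real \<times> real \<times> real \<times> real \<times> real"

definition unif01 :: "real measure" where
  "unif01 = uniform_measure lborel {0..1}"

definition sample_measure :: "sample measure" where
  "sample_measure = density lborel (normal_density 0 1) \<Otimes>\<^sub>M
     (unif01 \<Otimes>\<^sub>M (unif01 \<Otimes>\<^sub>M (unif01 \<Otimes>\<^sub>M unif01)))"

definition FOCuS_space :: "(nat \<Rightarrow> sample) measure" where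
  "FOCuS_space = PiM UNIV (\<lambda>_. sample_measure)"

text \<open>Uniform choice of an element of a finite nonempty set of naturals via u ~ U[0,1].\<close>
definition pick :: "real \<Rightarrow> nat set \<Rightarrow> nat" where
  "pick u S = sorted_list_of_set S ! min (card S - 1) (nat \<lfloor>u * real (card S)\<rfloor>)"

definition unif_stream :: "nat \<Rightarrow> real \<Rightarrow> nat" where
  "unif_stream M u = Suc (min (M - 1) (nat \<lfloor>u * real M\<rfloor>))"

text \<open>A history h is the list of (A_t, X_t) for t = 1..length h (h ! (t-1) = (A_t, X_t)).
  obs h m lists (time, value) of the observations X_1^(m), X_2^(m), ... of stream m.\<close>
definition obs :: "(nat \<times> real) list \<Rightarrow> nat \<Rightarrow> (nat \<times> real) list" where
  "obs h m = map (\<lambda>i. (Suc i, snd (h ! i))) (filter (\<lambda>i. fst (h ! i) = m) [0..<length h])"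

definition glr :: "(nat \<times> real) list \<Rightarrow> nat \<Rightarrow> nat \<Rightarrow> real" where
  "glr h m k = (let xs = map snd (obs h m); n = length xs
                in (\<Sum>i\<in>{k..<n}. xs ! i)\<^sup>2 / (2 * real (n - k)))"

definition Tstat :: "(nat \<times> real) list \<Rightarrow> nat \<Rightarrow> real" where
  "Tstat h m = (if obs h m = [] then 0 else Max (glr h m ` {..<length (obs h m)}))"

definition nuhat_loc :: "real \<Rightarrow> (nat \<times> real) list \<Rightarrow> nat \<Rightarrow> nat" where
  "nuhat_loc uk h m = (if obs h m = [] then 0 else
     (let k = pick uk {k. k < length (obs h m) \<and> glr h m k = Tstat h m}
      in if k = 0 then 0 else fst (obs h m ! (k - 1))))"

definition Tglob :: "nat \<Rightarrow> (nat \<times> real) list \<Rightarrow> real" where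
  "Tglob M h = Max (Tstat h ` {1..M})"

definition Mhat :: "nat \<Rightarrow> real \<Rightarrow> (nat \<times> real) list \<Rightarrow> nat" where
  "Mhat M um h = pick um {m \<in> {1..M}. Tstat h m = Tglob M h}"

definition nuhat :: "nat \<Rightarrow> real \<Rightarrow> real \<Rightarrow> (nat \<times> real) list \<Rightarrow> nat" where
  "nuhat M um uk h = nuhat_loc uk h (Mhat M um h)"

fun hist :: "nat \<Rightarrow> real \<Rightarrow> nat \<Rightarrow> (nat \<Rightarrow> sample) \<Rightarrow> nat \<Rightarrow> (nat \<times> real) list" where
  "hist M mu nu \<omega> 0 = []"
| "hist M mu nu \<omega> (Suc t) =
     (let h = hist M mu nu \<omega> t;
          (_, _, _, um, uk) = \<omega> t;
          Mprev = Mhat M um h;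
          nuprev = nuhat M um uk h;
          n = Suc t;
          eps = min 1 (real M / (max 1 (real n - real nuprev)) powr (1/3));
          (z, ug, ua, _, _) = \<omega> n;
          A = (if ug < eps then unif_stream M ua else Mprev);
          X = z + (if A = 1 \<and> nu < n then mu else 0)
      in h @ [(A, X)])"

end

theory Submission
  imports Defs
begin


lemma prob_unif01: "prob_space unif01"
  unfolding unif01_def by (rule prob_space_uniform_measure) simp_all

lemma prob_normal01: "prob_space (density lborel (normal_density 0 1))"
  by (rule prob_space_normal_density) simp

lemma prob_sample: "prob_space sample_measure"
  unfolding sample_measure_def
  by (intro prob_space_pair prob_normal01 prob_unif01)

interpretation S: sequence_space sample_measure
  by (simp add: sequence_space_def product_prob_space_def product_prob_space_axioms_def
      product_sigma_finite_def prob_sample prob_space_imp_sigma_finite)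

lemma FOCuS_prob: "prob_space FOCuS_space"
  unfolding FOCuS_space_def by (rule S.prob_space_axioms)

lemma nn_integral_pair_le:
  assumes "sigma_finite_measure M1" "sigma_finite_measure M2"
  shows "integral\<^sup>N (M1 \<Otimes>\<^sub>M M2) f \<le> (\<integral>\<^sup>+ x. \<integral>\<^sup>+ y. f (x, y) \<partial>M2 \<partial>M1)"
proof -
  interpret P: pair_sigma_finite M1 M2 using assms by (simp add: pair_sigma_finite_def)
  show ?thesis
    unfolding nn_integral_def[of "M1 \<Otimes>\<^sub>M M2"]
  proof (rule SUP_least)
    fix g assume g: "g \<in> {g. simple_function (M1 \<Otimes>\<^sub>M M2) g \<and> g \<le> f}"
    then have gm: "g \<in> borel_measurable (M1 \<Otimes>\<^sub>M M2)"
      by (auto intro: borel_measurable_simple_function)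
    have "integral\<^sup>S (M1 \<Otimes>\<^sub>M M2) g = integral\<^sup>N (M1 \<Otimes>\<^sub>M M2) g"
      using g by (simp add: nn_integral_eq_simple_integral)
    also have "\<dots> = (\<integral>\<^sup>+ x. \<integral>\<^sup>+ y. g (x, y) \<partial>M2 \<partial>M1)"
      by (rule P.M2.nn_integral_fst[OF gm, symmetric])
    also have "\<dots> \<le> (\<integral>\<^sup>+ x. \<integral>\<^sup>+ y. f (x, y) \<partial>M2 \<partial>M1)"
      using g by (intro nn_integral_mono) (auto simp: le_fun_def)
    finally show "integral\<^sup>S (M1 \<Otimes>\<^sub>M M2) g \<le> \<dots>" .
  qed
qed

lemma nn_integral_pair_le_swap:
  assumes "sigma_finite_measure M1" "sigma_finite_measure M2"
  shows "integral\<^sup>N (M1 \<Otimes>\<^sub>M M2) f \<le> (\<integral>\<^sup>+ y. \<integral>\<^sup>+ x. f (x, y) \<partial>M1 \<partial>M2)"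
proof -
  interpret P: pair_sigma_finite M1 M2 using assms by (simp add: pair_sigma_finite_def)
  show ?thesis
    unfolding nn_integral_def[of "M1 \<Otimes>\<^sub>M M2"]
  proof (rule SUP_least)
    fix g assume g: "g \<in> {g. simple_function (M1 \<Otimes>\<^sub>M M2) g \<and> g \<le> f}"
    then have gm: "g \<in> borel_measurable (M1 \<Otimes>\<^sub>M M2)"
      by (auto intro: borel_measurable_simple_function)
    have "integral\<^sup>S (M1 \<Otimes>\<^sub>M M2) g = integral\<^sup>N (M1 \<Otimes>\<^sub>M M2) g"
      using g by (simp add: nn_integral_eq_simple_integral)
    also have "\<dots> = (\<integral>\<^sup>+ y. \<integral>\<^sup>+ x. g (x, y) \<partial>M1 \<partial>M2)"
      by (rule P.nn_integral_snd[OF gm, symmetric])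
    also have "\<dots> \<le> (\<integral>\<^sup>+ y. \<integral>\<^sup>+ x. f (x, y) \<partial>M1 \<partial>M2)"
      using g by (intro nn_integral_mono) (auto simp: le_fun_def)
    finally show "integral\<^sup>S (M1 \<Otimes>\<^sub>M M2) g \<le> \<dots>" .
  qed
qed

lemma nn_integral_distr_le:
  assumes T: "T \<in> measurable M N"
  shows "integral\<^sup>N (distr M N T) f \<le> (\<integral>\<^sup>+ x. f (T x) \<partial>M)"
  unfolding nn_integral_def[of "distr M N T"]
proof (rule SUP_least)
  fix g assume g: "g \<in> {g. simple_function (distr M N T) g \<and> g \<le> f}"
  then have gm: "g \<in> borel_measurable (distr M N T)"
    by (blast intro: borel_measurable_simple_function)
  have "integral\<^sup>S (distr M N T) g = integral\<^sup>N (distr M N T) g"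
    using g by (simp add: nn_integral_eq_simple_integral)
  also have "\<dots> = (\<integral>\<^sup>+ x. g (T x) \<partial>M)"
    by (rule nn_integral_distr[OF T gm])
  also have "\<dots> \<le> (\<integral>\<^sup>+ x. f (T x) \<partial>M)"
    using g by (intro nn_integral_mono) (auto simp: le_fun_def)
  finally show "integral\<^sup>S (distr M N T) g \<le> \<dots>" .
qed

lemma FOCuS_iter_le:
  "integral\<^sup>N FOCuS_space f \<le> (\<integral>\<^sup>+ s. \<integral>\<^sup>+ w. f (case_nat s w) \<partial>FOCuS_space \<partial>sample_measure)"
proof -
  have m: "(\<lambda>(s, w). case_nat s w) \<in> measurable (sample_measure \<Otimes>\<^sub>M FOCuS_space) FOCuS_space"
  proof -
    have "(\<lambda>x. case_nat (fst x) (snd x)) \<in> measurable (sample_measure \<Otimes>\<^sub>M FOCuS_space) FOCuS_space"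
      unfolding FOCuS_space_def by (rule measurable_case_nat') auto
    then show ?thesis by (simp add: split_beta')
  qed
  have "integral\<^sup>N FOCuS_space f = integral\<^sup>N (distr (sample_measure \<Otimes>\<^sub>M FOCuS_space) FOCuS_space (\<lambda>(s, w). case_nat s w)) f"
    unfolding FOCuS_space_def S.PiM_iter ..
  also have "\<dots> \<le> (\<integral>\<^sup>+ x. f (case_prod case_nat x) \<partial>(sample_measure \<Otimes>\<^sub>M FOCuS_space))"
    by (rule nn_integral_distr_le[OF m])
  also have "\<dots> \<le> (\<integral>\<^sup>+ s. \<integral>\<^sup>+ w. f (case_nat s w) \<partial>FOCuS_space \<partial>sample_measure)"
    using nn_integral_pair_le[of sample_measure FOCuS_space "\<lambda>x. f (case_prod case_nat x)"]
    by (simp add: prob_space_imp_sigma_finite prob_sample FOCuS_prob)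
  finally show ?thesis .
qed

lemma sample_space1[simp]: "emeasure sample_measure (space sample_measure) = 1"
  by (rule prob_space.emeasure_space_1[OF prob_sample])

lemma FOCuS_space1[simp]: "emeasure FOCuS_space (space FOCuS_space) = 1"
  by (rule prob_space.emeasure_space_1[OF FOCuS_prob])

lemma nn_integral_const_prob:
  assumes "prob_space M" shows "(\<integral>\<^sup>+ x. c \<partial>M) = c"
  using assms by (simp add: prob_space.emeasure_space_1)

fun Eit :: "nat \<Rightarrow> ((nat \<Rightarrow> sample) \<Rightarrow> ennreal) \<Rightarrow> ennreal" where
  "Eit 0 f = f (\<lambda>_. undefined)"
| "Eit (Suc k) f = Eit k (\<lambda>w. \<integral>\<^sup>+ s. f (w(k := s)) \<partial>sample_measure)"

definition dep :: "nat \<Rightarrow> ((nat \<Rightarrow> sample) \<Rightarrow> 'b) \<Rightarrow> bool" where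
  "dep k f \<longleftrightarrow> (\<forall>w w'. (\<forall>i<k. w i = w' i) \<longrightarrow> f w = f w')"

lemma Eit_mono: "(\<And>w. f w \<le> g w) \<Longrightarrow> Eit k f \<le> Eit k g"
proof (induction k arbitrary: f g)
  case 0 then show ?case by simp
next
  case (Suc k)
  show ?case unfolding Eit.simps
    by (rule Suc.IH) (intro nn_integral_mono Suc.prems)
qed

lemma Eit_const: "Eit k (\<lambda>_. c) = c"
  by (induction k arbitrary: c) (simp_all add: nn_integral_const_prob prob_sample)

lemma Eit_dep: "dep j f \<Longrightarrow> j \<le> k \<Longrightarrow> Eit k f = Eit j f"
proof (induction k)
  case 0 then show ?case by simp
next
  case (Suc k)
  show ?case
  proof (cases "j = Suc k")
    case False
    then have jk: "j \<le> k" using Suc.prems by simp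
    have "(\<lambda>w. \<integral>\<^sup>+ s. f (w(k := s)) \<partial>sample_measure) = f"
    proof
      fix w
      have "\<And>s. f (w(k := s)) = f w"
        using Suc.prems(1) jk unfolding dep_def by (metis fun_upd_other less_le_trans less_irrefl)
      then show "(\<integral>\<^sup>+ s. f (w(k := s)) \<partial>sample_measure) = f w"
        by (simp add: nn_integral_const_prob prob_sample)
    qed
    then show ?thesis using Suc jk by simp
  qed simp
qed

definition mrg :: "nat \<Rightarrow> (nat \<Rightarrow> 'a) \<Rightarrow> (nat \<Rightarrow> 'a) \<Rightarrow> nat \<Rightarrow> 'a" where
  "mrg k w w' i = (if i < k then w i else w' (i - k))"

lemma mrg_Suc: "mrg (Suc k) (w(k := s)) w' = mrg k w (case_nat s w')"
proof (rule ext)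
  fix i show "mrg (Suc k) (w(k := s)) w' i = mrg k w (case_nat s w') i"
  proof (cases "i < k")
    case True then show ?thesis by (simp add: mrg_def)
  next
    case False
    then obtain d where d: "i = k + d" by (metis le_Suc_ex not_less)
    show ?thesis by (cases d) (simp_all add: mrg_def d)
  qed
qed

lemma FOCuS_le_Eit_aux:
  "integral\<^sup>N FOCuS_space f \<le> Eit k (\<lambda>w. \<integral>\<^sup>+ w'. f (mrg k w w') \<partial>FOCuS_space)"
proof (induction k)
  case 0 then show ?case by (simp add: mrg_def)
next
  case (Suc k)
  have "Eit k (\<lambda>w. \<integral>\<^sup>+ w'. f (mrg k w w') \<partial>FOCuS_space)
     \<le> Eit k (\<lambda>w. \<integral>\<^sup>+ s. \<integral>\<^sup>+ w'. f (mrg (Suc k) (w(k := s)) w') \<partial>FOCuS_space \<partial>sample_measure)"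
    unfolding mrg_Suc by (rule Eit_mono) (rule FOCuS_iter_le)
  then show ?case using Suc by simp
qed

lemma FOCuS_le_Eit:
  assumes "dep k f" shows "integral\<^sup>N FOCuS_space f \<le> Eit k f"
proof -
  have "\<And>w w'. f (mrg k w w') = f w"
    using assms unfolding dep_def mrg_def by auto
  then show ?thesis using FOCuS_le_Eit_aux[of f k]
    by (simp add: nn_integral_const_prob FOCuS_prob)
qed

lemma normal_shift: "normal_density 0 1 z * exp (th * z - th\<^sup>2 / 2) = normal_density th 1 z"
proof -
  have "-(z - 0)\<^sup>2 / (2 * 1\<^sup>2) + (th * z - th\<^sup>2 / 2) = -(z - th)\<^sup>2 / (2 * 1\<^sup>2)"
    by (simp add: power2_eq_square field_simps)
  then show ?thesis unfolding normal_density_def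
    by (simp add: exp_add[symmetric] mult.assoc)
qed

lemma normal_mgf:
  "(\<integral>\<^sup>+ z. ennreal (exp (th * z - th\<^sup>2 / 2)) \<partial>density lborel (normal_density 0 1)) = 1"
proof -
  have "(\<integral>\<^sup>+ z. ennreal (exp (th * z - th\<^sup>2 / 2)) \<partial>density lborel (normal_density 0 1))
      = (\<integral>\<^sup>+ z. ennreal (normal_density 0 1 z) * ennreal (exp (th * z - th\<^sup>2 / 2)) \<partial>lborel)"
    by (subst nn_integral_density) auto
  also have "\<dots> = (\<integral>\<^sup>+ z. ennreal (normal_density th 1 z) \<partial>lborel)"
    by (simp add: ennreal_mult'[symmetric] normal_shift normal_density_nonneg)
  also have "\<dots> = 1"
    by (subst nn_integral_eq_integral) (auto simp: normal_density_nonneg)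
  finally show ?thesis .
qed

lemma prob_rest: "prob_space (unif01 \<Otimes>\<^sub>M (unif01 \<Otimes>\<^sub>M (unif01 \<Otimes>\<^sub>M unif01)))"
  by (intro prob_space_pair prob_unif01)

lemma gauss_step:
  assumes "finite J"
  shows "(\<integral>\<^sup>+ s. (\<Sum>j\<in>J. w j * ennreal (exp (if b j (fst (snd s)) (fst (snd (snd s)))
            then th j * fst s - (th j)\<^sup>2 / 2 else 0))) \<partial>sample_measure) \<le> (\<Sum>j\<in>J. w j)"
proof -
  let ?N = "density lborel (normal_density 0 1)"
  let ?R = "unif01 \<Otimes>\<^sub>M (unif01 \<Otimes>\<^sub>M (unif01 \<Otimes>\<^sub>M unif01))"
  define f where "f = (\<lambda>s::sample. (\<Sum>j\<in>J. w j * ennreal (exp (if b j (fst (snd s)) (fst (snd (snd s)))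
            then th j * fst s - (th j)\<^sup>2 / 2 else 0))))"
  have "integral\<^sup>N sample_measure f \<le> (\<integral>\<^sup>+ r. \<integral>\<^sup>+ z. f (z, r) \<partial>?N \<partial>?R)"
    unfolding sample_measure_def
    by (rule nn_integral_pair_le_swap)
       (auto intro: prob_space_imp_sigma_finite prob_normal01 prob_rest)
  also have "\<dots> = (\<integral>\<^sup>+ r. (\<Sum>j\<in>J. w j) \<partial>?R)"
  proof (rule nn_integral_cong)
    fix r :: "real \<times> real \<times> real \<times> real"
    have "(\<integral>\<^sup>+ z. f (z, r) \<partial>?N) = (\<Sum>j\<in>J. \<integral>\<^sup>+ z. w j * ennreal (exp (if b j (fst r) (fst (snd r))
            then th j * z - (th j)\<^sup>2 / 2 else 0)) \<partial>?N)"
    proof -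
      have m: "\<And>j. (\<lambda>z. w j * ennreal (exp (if b j (fst r) (fst (snd r))
            then th j * z - (th j)\<^sup>2 / 2 else 0))) \<in> borel_measurable ?N"
        by measurable
      have "(\<integral>\<^sup>+ z. f (z, r) \<partial>?N) = (\<integral>\<^sup>+ z. (\<Sum>j\<in>J. w j * ennreal (exp (if b j (fst r) (fst (snd r))
            then th j * z - (th j)\<^sup>2 / 2 else 0))) \<partial>?N)"
        by (rule nn_integral_cong) (simp add: f_def cong: if_cong)
      also have "\<dots> = (\<Sum>j\<in>J. \<integral>\<^sup>+ z. w j * ennreal (exp (if b j (fst r) (fst (snd r))
            then th j * z - (th j)\<^sup>2 / 2 else 0)) \<partial>?N)"
        by (rule nn_integral_sum[OF m])
      finally show ?thesis .
    qed
    also have "\<dots> = (\<Sum>j\<in>J. w j)"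
    proof (rule sum.cong)
      fix j assume "j \<in> J"
      have "(\<integral>\<^sup>+ z. w j * ennreal (exp (if b j (fst r) (fst (snd r))
            then th j * z - (th j)\<^sup>2 / 2 else 0)) \<partial>?N)
          = w j * (\<integral>\<^sup>+ z. ennreal (exp (if b j (fst r) (fst (snd r))
            then th j * z - (th j)\<^sup>2 / 2 else 0)) \<partial>?N)"
        by (subst nn_integral_cmult) auto
      also have "\<dots> = w j"
        using normal_mgf[of "th j"] prob_space.emeasure_space_1[OF prob_normal01]
        by (cases "b j (fst r) (fst (snd r))") auto
      finally show "(\<integral>\<^sup>+ z. w j * ennreal (exp (if b j (fst r) (fst (snd r))
            then th j * z - (th j)\<^sup>2 / 2 else 0)) \<partial>?N) = w j" .
    qed simp
    finally show "(\<integral>\<^sup>+ z. f (z, r) \<partial>?N) = (\<Sum>j\<in>J. w j)" by simp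
  qed
  also have "\<dots> = (\<Sum>j\<in>J. w j)"
    by (rule nn_integral_const_prob[OF prob_rest])
  finally show ?thesis unfolding f_def .
qed

lemma inv2_mult: "0 \<le> x \<Longrightarrow> inverse 2 * ennreal x = ennreal (x/2)"
  by (metis Groups.mult_ac(2) divide_ennreal_def ennreal_divide_numeral)

lemma inv2_add: "inverse 2 + inverse 2 = (1::ennreal)"
  by (metis ennreal_half ennreal_plus field_sum_of_halves ennreal_1 zero_le_divide_1_iff zero_le_numeral)

definition Bq :: "real \<Rightarrow> nat \<Rightarrow> sample \<Rightarrow> bool" where
  "Bq q M s \<longleftrightarrow> fst (snd s) < q \<and> fst (snd (snd s)) < 1 / real M"

lemma unif01_less: "0 \<le> q \<Longrightarrow> q \<le> 1 \<Longrightarrow> emeasure unif01 {..<q} = ennreal q"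
proof -
  assume q: "0 \<le> q" "q \<le> 1"
  have "{0..1} \<inter> {..<q} = {0..<q}" using q by auto
  then show ?thesis unfolding unif01_def using q by (simp add: divide_ennreal_def)
qed

lemma bern_step:
  assumes q: "0 \<le> q" "q \<le> 1" and M: "M \<ge> 1"
  shows "(\<integral>\<^sup>+ s. ennreal (if Bq q M s then 1/2 else 1) \<partial>sample_measure) = ennreal (1 - q / (2 * real M))"
proof -
  let ?N = "density lborel (normal_density 0 1)"
  let ?R3 = "unif01 \<Otimes>\<^sub>M unif01"
  let ?R = "unif01 \<Otimes>\<^sub>M (unif01 \<Otimes>\<^sub>M ?R3)"
  define B where "B = space ?N \<times> ({..<q} \<times> ({..<1 / real M} \<times> space ?R3))"
  have sf: "sigma_finite_measure ?R3" "sigma_finite_measure (unif01 \<Otimes>\<^sub>M ?R3)" "sigma_finite_measure ?R"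
    by (intro prob_space_imp_sigma_finite prob_space_pair prob_unif01)+
  have s1: "{..<q} \<in> sets unif01" "{..<1 / real M} \<in> sets unif01"
    by (simp_all add: unif01_def)
  have pR3: "emeasure ?R3 (space ?R3) = 1"
    by (intro prob_space.emeasure_space_1 prob_space_pair prob_unif01)
  have pN: "emeasure ?N (space ?N) = 1"
    by (rule prob_space.emeasure_space_1[OF prob_normal01])
  have M1: "1 / real M \<le> 1" "0 \<le> 1 / real M" using M by auto
  have e2: "emeasure (unif01 \<Otimes>\<^sub>M ?R3) ({..<1 / real M} \<times> space ?R3) = ennreal (1 / real M)"
    by (subst sigma_finite_measure.emeasure_pair_measure_Times[OF sf(1)])
       (simp_all add: s1 pR3 unif01_less[OF M1(2) M1(1)])
  have e1: "emeasure ?R ({..<q} \<times> ({..<1 / real M} \<times> space ?R3)) = ennreal (q / real M)"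
    by (subst sigma_finite_measure.emeasure_pair_measure_Times[OF sf(2)])
       (simp_all add: s1 e2 unif01_less[OF q] ennreal_mult'[symmetric] q)
  have Bs: "B \<in> sets sample_measure"
    unfolding B_def sample_measure_def using s1 by auto
  have eB: "emeasure sample_measure B = ennreal (q / real M)"
    unfolding B_def sample_measure_def
    by (subst sigma_finite_measure.emeasure_pair_measure_Times[OF sf(3)])
       (simp_all add: s1 e1 pN[simplified])
  have spB: "\<And>s. s \<in> B \<longleftrightarrow> Bq q M s"
    unfolding B_def Bq_def by (auto simp: space_pair_measure unif01_def)
  have "(\<integral>\<^sup>+ s. ennreal (if Bq q M s then 1/2 else 1) \<partial>sample_measure)
      = (\<integral>\<^sup>+ s. ennreal (1/2) + ennreal (1/2) * indicator (space sample_measure - B) s \<partial>sample_measure)"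
    by (rule nn_integral_cong) (auto simp: spB[symmetric] indicator_def inv2_add)
  also have "\<dots> = ennreal (1/2) + ennreal (1/2) * emeasure sample_measure (space sample_measure - B)"
    using Bs by (subst nn_integral_add) (auto simp: nn_integral_const_prob prob_sample nn_integral_cmult_indicator)
  also have "emeasure sample_measure (space sample_measure - B) = ennreal (1 - q / real M)"
    using Bs q M by (subst emeasure_compl) (auto simp: eB ennreal_minus ennreal_1[symmetric] simp del: ennreal_1)
  also have "ennreal (1/2) + ennreal (1/2) * ennreal (1 - q / real M) = ennreal (1/2 + 1/2 * (1 - q / real M))"
  proof -
    have a: "0 \<le> 1 - q / real M" using q M by (simp add: field_simps)
    then show ?thesis by (simp add: inv2_mult ennreal_plus)
  qed
  also have "\<dots> = ennreal (1 - q / (2 * real M))"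
    by (rule arg_cong[where f=ennreal]) (simp add: field_simps)
  finally show ?thesis .
qed



definition armsel :: "nat \<Rightarrow> real \<Rightarrow> (nat \<Rightarrow> sample) \<Rightarrow> nat \<Rightarrow> real \<Rightarrow> real \<Rightarrow> nat" where
  "armsel M mu w t ug ua = (let h = hist M mu 0 w t; um = fst (snd (snd (snd (w t))));
       uk = snd (snd (snd (snd (w t))));
       eps = min 1 (real M / (max 1 (real (Suc t) - real (nuhat M um uk h))) powr (1/3))
     in if ug < eps then unif_stream M ua else Mhat M um h)"

lemma hist_Suc':
  "hist M mu 0 w (Suc t) = hist M mu 0 w t @
     [(armsel M mu w t (fst (snd (w (Suc t)))) (fst (snd (snd (w (Suc t))))),
       fst (w (Suc t)) + (if armsel M mu w t (fst (snd (w (Suc t)))) (fst (snd (snd (w (Suc t))))) = 1 then mu else 0))]"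
  by (simp add: armsel_def Let_def split: prod.split)

declare hist.simps(2)[simp del]

lemma hist_len[simp]: "length (hist M mu 0 w t) = t"
  by (induction t) (simp_all add: hist_Suc' del: hist.simps(2))

lemma hist_nth: "i < t \<Longrightarrow> hist M mu 0 w t ! i = hist M mu 0 w (Suc i) ! i"
proof (induction t)
  case 0 then show ?case by simp
next
  case (Suc t)
  show ?case
  proof (cases "i = t")
    case True then show ?thesis by simp
  next
    case False
    then have "i < t" using Suc.prems by simp
    then show ?thesis using Suc.IH
      by (simp add: hist_Suc'[of M mu w t] nth_append del: hist.simps(2))
  qed
qed

lemma hist_last_fst: "fst (hist M mu 0 w (Suc i) ! i) = armsel M mu w i (fst (snd (w (Suc i)))) (fst (snd (snd (w (Suc i)))))"
  by (simp add: hist_Suc'[of M mu w i] nth_append del: hist.simps(2))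

lemma hist_nth_snd: "i < t \<Longrightarrow> snd (hist M mu 0 w t ! i) = fst (w (Suc i)) + (if fst (hist M mu 0 w t ! i) = 1 then mu else 0)"
  by (simp add: hist_nth hist_Suc'[of M mu w i] nth_append del: hist.simps(2))

lemma hist_dep: "(\<And>i. i \<le> t \<Longrightarrow> w i = w' i) \<Longrightarrow> hist M mu 0 w t = hist M mu 0 w' t"
proof (induction t)
  case 0 then show ?case by simp
next
  case (Suc t)
  have e1: "hist M mu 0 w t = hist M mu 0 w' t" using Suc by simp
  have e2: "w t = w' t" "w (Suc t) = w' (Suc t)" using Suc.prems by auto
  show ?case unfolding hist_Suc' armsel_def by (simp only: e1 e2)
qed

lemma armsel_dep: "(\<And>i. i \<le> t \<Longrightarrow> w i = w' i) \<Longrightarrow> armsel M mu w t = armsel M mu w' t"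
proof -
  assume a: "\<And>i. i \<le> t \<Longrightarrow> w i = w' i"
  then have "hist M mu 0 w t = hist M mu 0 w' t" "w t = w' t" by (auto intro: hist_dep)
  then show ?thesis by (simp add: armsel_def[abs_def])
qed

lemma unif_stream_1: "M \<ge> 1 \<Longrightarrow> ua < 1 / real M \<Longrightarrow> unif_stream M ua = 1"
proof -
  assume M: "M \<ge> 1" and u: "ua < 1 / real M"
  have "ua * real M < 1" using u M by (simp add: field_simps)
  then have "\<lfloor>ua * real M\<rfloor> \<le> 0" by linarith
  then have "nat \<lfloor>ua * real M\<rfloor> = 0" by simp
  then show ?thesis unfolding unif_stream_def by simp
qed

lemma armsel_explore:
  assumes M: "M \<ge> 1" and iT: "Suc i \<le> T" and ug: "ug < min 1 (real M / real T powr (1/3))"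
    and ua: "ua < 1 / real M"
  shows "armsel M mu w i ug ua = 1"
proof -
  let ?nu = "nuhat M (fst (snd (snd (snd (w i))))) (snd (snd (snd (snd (w i))))) (hist M mu 0 w i)"
  have T1: "1 \<le> real T" using iT by simp
  have le: "max 1 (real (Suc i) - real ?nu) \<le> real T" using iT T1 by auto
  have "max 1 (real (Suc i) - real ?nu) powr (1/3) \<le> real T powr (1/3)"
    by (rule powr_mono2) (use le in auto)
  moreover have "0 < max 1 (real (Suc i) - real ?nu) powr (1/3)" by simp
  ultimately have "real M / real T powr (1/3) \<le> real M / max 1 (real (Suc i) - real ?nu) powr (1/3)"
    by (intro frac_le) auto
  then have "ug < min 1 (real M / max 1 (real (Suc i) - real ?nu) powr (1/3))"
    using ug by linarith
  then show ?thesis using unif_stream_1[OF M ua] by (simp add: armsel_def Let_def)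
qed

definition Dm :: "nat \<Rightarrow> real \<Rightarrow> nat \<Rightarrow> real \<Rightarrow> nat \<Rightarrow> (nat \<Rightarrow> sample) \<Rightarrow> real" where
  "Dm M mu m th i w = (if fst (hist M mu 0 w (Suc i) ! i) = m then th * fst (w (Suc i)) - th\<^sup>2 / 2 else 0)"

definition Fj :: "nat \<Rightarrow> real \<Rightarrow> nat \<times> nat \<times> real \<Rightarrow> nat \<Rightarrow> (nat \<Rightarrow> sample) \<Rightarrow> ennreal" where
  "Fj M mu j t w = ennreal (exp (\<Sum>i\<in>{fst (snd j)..<t}. Dm M mu (fst j) (snd (snd j)) i w))"

lemma Dm_dep: "(\<And>i'. i' \<le> Suc i \<Longrightarrow> w i' = w' i') \<Longrightarrow> Dm M mu m th i w = Dm M mu m th i w'"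
proof -
  assume a: "\<And>i'. i' \<le> Suc i \<Longrightarrow> w i' = w' i'"
  then have "hist M mu 0 w (Suc i) = hist M mu 0 w' (Suc i)" by (rule hist_dep)
  with a[of "Suc i"] show ?thesis by (simp add: Dm_def)
qed

lemma Fj_dep: "dep (Suc t) (Fj M mu j t)"
  unfolding dep_def
proof (intro allI impI)
  fix w w' :: "nat \<Rightarrow> sample" assume a: "\<forall>i<Suc t. w i = w' i"
  have "\<And>i. i \<in> {fst (snd j)..<t} \<Longrightarrow> Dm M mu (fst j) (snd (snd j)) i w = Dm M mu (fst j) (snd (snd j)) i w'"
    by (rule Dm_dep) (use a in auto)
  then show "Fj M mu j t w = Fj M mu j t w'"
    unfolding Fj_def by (metis (no_types, lifting) sum.cong)
qed

lemma Fj_Suc: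
  "Fj M mu j (Suc t) (w(Suc t := s)) = Fj M mu j t w * ennreal (exp (if fst (snd j) \<le> t \<and>
      armsel M mu w t (fst (snd s)) (fst (snd (snd s))) = fst j then snd (snd j) * fst s - (snd (snd j))\<^sup>2 / 2 else 0))"
proof -
  let ?w = "w(Suc t := s)"
  obtain m a th where j: "j = (m, a, th)" by (cases j) auto
  have eqi: "\<And>i. i \<in> {a..<t} \<Longrightarrow> Dm M mu m th i ?w = Dm M mu m th i w"
    by (rule Dm_dep) auto
  show ?thesis
  proof (cases "a \<le> t")
    case True
    have iv: "{a..<Suc t} = insert t {a..<t}" using True by auto
    have ar: "armsel M mu ?w t = armsel M mu w t" by (rule armsel_dep) auto
    have "Dm M mu m th t ?w = (if armsel M mu w t (fst (snd s)) (fst (snd (snd s))) = m then th * fst s - th\<^sup>2 / 2 else 0)"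
      unfolding Dm_def hist_last_fst ar by simp
    moreover have "(\<Sum>i\<in>{a..<Suc t}. Dm M mu m th i ?w) = (\<Sum>i\<in>{a..<t}. Dm M mu m th i ?w) + Dm M mu m th t ?w"
      unfolding iv by simp
    moreover have "(\<Sum>i\<in>{a..<t}. Dm M mu m th i ?w) = (\<Sum>i\<in>{a..<t}. Dm M mu m th i w)"
      by (rule sum.cong[OF refl eqi])
    ultimately have "(\<Sum>i\<in>{a..<Suc t}. Dm M mu m th i ?w) = (\<Sum>i\<in>{a..<t}. Dm M mu m th i w) +
        (if armsel M mu w t (fst (snd s)) (fst (snd (snd s))) = m then th * fst s - th\<^sup>2 / 2 else 0)"
      by simp
    then show ?thesis using True unfolding Fj_def j
      by (simp add: exp_add ennreal_mult)
  next
    case False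
    then show ?thesis unfolding Fj_def j by simp
  qed
qed

lemma Fj_0: "Fj M mu j 0 w = 1"
  by (simp add: Fj_def)

lemma mart:
  assumes "finite J"
  shows "Eit (Suc t) (\<lambda>w. \<Sum>j\<in>J. c j * Fj M mu j t w) \<le> (\<Sum>j\<in>J. c j)"
proof (induction t arbitrary: c)
  case 0
  show ?case by (simp add: Fj_0 Eit_const del: Eit.simps)
next
  case (Suc t)
  have step: "(\<integral>\<^sup>+ s. (\<Sum>j\<in>J. c j * Fj M mu j (Suc t) (w(Suc t := s))) \<partial>sample_measure)
      \<le> (\<Sum>j\<in>J. c j * Fj M mu j t w)" for w
  proof -
    have "(\<integral>\<^sup>+ s. (\<Sum>j\<in>J. c j * Fj M mu j (Suc t) (w(Suc t := s))) \<partial>sample_measure)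
      = (\<integral>\<^sup>+ s. (\<Sum>j\<in>J. (c j * Fj M mu j t w) * ennreal (exp (if (\<lambda>j ug ua. fst (snd j) \<le> t \<and>
      armsel M mu w t ug ua = fst j) j (fst (snd s)) (fst (snd (snd s))) then (\<lambda>j. snd (snd j)) j * fst s - ((\<lambda>j. snd (snd j)) j)\<^sup>2 / 2 else 0))) \<partial>sample_measure)"
      by (rule nn_integral_cong) (simp add: Fj_Suc mult.assoc)
    also have "\<dots> \<le> (\<Sum>j\<in>J. c j * Fj M mu j t w)"
      by (rule gauss_step[OF assms])
    finally show ?thesis .
  qed
  have "Eit (Suc (Suc t)) (\<lambda>w. \<Sum>j\<in>J. c j * Fj M mu j (Suc t) w)
     = Eit (Suc t) (\<lambda>w. \<integral>\<^sup>+ s. (\<Sum>j\<in>J. c j * Fj M mu j (Suc t) (w(Suc t := s))) \<partial>sample_measure)"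
    by (simp only: Eit.simps(2))
  also have "\<dots> \<le> Eit (Suc t) (\<lambda>w. \<Sum>j\<in>J. c j * Fj M mu j t w)"
    by (rule Eit_mono) (rule step)
  also have "\<dots> \<le> (\<Sum>j\<in>J. c j)" by (rule Suc.IH)
  finally show ?case .
qed

definition Cnt :: "real \<Rightarrow> nat \<Rightarrow> nat \<Rightarrow> (nat \<Rightarrow> sample) \<Rightarrow> nat" where
  "Cnt q M t w = card {i. i < t \<and> Bq q M (w (Suc i))}"

lemma Cnt_Suc: "Cnt q M (Suc t) (w(Suc t := s)) = Cnt q M t w + (if Bq q M s then 1 else 0)"
proof -
  have e: "{i. i < Suc t \<and> Bq q M ((w(Suc t := s)) (Suc i))} =
        {i. i < t \<and> Bq q M (w (Suc i))} \<union> (if Bq q M s then {t} else {})"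
    by (auto simp: less_Suc_eq)
  show ?thesis unfolding Cnt_def e by (auto simp: card_insert_if)
qed

lemma Cnt_dep: "dep (Suc t) (Cnt q M t)"
  unfolding dep_def
proof (intro allI impI)
  fix w w' :: "nat \<Rightarrow> sample" assume a: "\<forall>i<Suc t. w i = w' i"
  have "{i. i < t \<and> Bq q M (w (Suc i))} = {i. i < t \<and> Bq q M (w' (Suc i))}"
    using a by auto
  then show "Cnt q M t w = Cnt q M t w'" unfolding Cnt_def by simp
qed

lemma Bq_pred: "{s \<in> space sample_measure. Bq q M s} \<in> sets sample_measure"
proof -
  have "{s \<in> space sample_measure. Bq q M s} = space (density lborel (normal_density 0 1)) \<times> ({..<q} \<times> ({..<1 / real M} \<times> space (unif01 \<Otimes>\<^sub>M unif01)))"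
    unfolding Bq_def sample_measure_def by (auto simp: space_pair_measure unif01_def)
  also have "\<dots> \<in> sets sample_measure"
    unfolding sample_measure_def by (intro pair_measureI sets.top) (simp_all add: unif01_def)
  finally show ?thesis .
qed

lemma Bq_meas: "(\<lambda>s. ennreal (if Bq q M s then 1/2 else 1)) \<in> borel_measurable sample_measure"
proof -
  have "Measurable.pred sample_measure (Bq q M)"
    using Bq_pred by (simp add: pred_def)
  then show ?thesis by measurable
qed

lemma bern_mart:
  assumes q: "0 \<le> q" "q \<le> 1" and M: "M \<ge> 1"
  shows "Eit (Suc t) (\<lambda>w. c * ennreal ((1/2) ^ Cnt q M t w)) \<le> c * ennreal ((1 - q / (2 * real M)) ^ t)"
proof (induction t arbitrary: c)
  case 0
  show ?case by (simp add: Cnt_def Eit_const del: Eit.simps)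
next
  case (Suc t)
  let ?r = "1 - q / (2 * real M)"
  have r0: "0 \<le> ?r" using q M by (simp add: field_simps)
  have step: "(\<integral>\<^sup>+ s. c * ennreal ((1/2) ^ Cnt q M (Suc t) (w(Suc t := s))) \<partial>sample_measure)
      = (c * ennreal ?r) * ennreal ((1/2) ^ Cnt q M t w)" for w
  proof -
    have "(\<integral>\<^sup>+ s. c * ennreal ((1/2) ^ Cnt q M (Suc t) (w(Suc t := s))) \<partial>sample_measure)
      = (\<integral>\<^sup>+ s. (c * ennreal ((1/2) ^ Cnt q M t w)) * ennreal (if Bq q M s then 1/2 else 1) \<partial>sample_measure)"
      by (rule nn_integral_cong) (simp add: Cnt_Suc ennreal_mult'[symmetric] mult.assoc)
    also have "\<dots> = (c * ennreal ((1/2) ^ Cnt q M t w)) * ennreal ?r"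
      by (subst nn_integral_cmult) (simp_all add: Bq_meas bern_step[OF q M])
    finally show ?thesis by (simp add: mult_ac)
  qed
  have "Eit (Suc (Suc t)) (\<lambda>w. c * ennreal ((1/2) ^ Cnt q M (Suc t) w))
     = Eit (Suc t) (\<lambda>w. (c * ennreal ?r) * ennreal ((1/2) ^ Cnt q M t w))"
    by (simp only: Eit.simps(2) step)
  also have "\<dots> \<le> (c * ennreal ?r) * ennreal (?r ^ t)" by (rule Suc.IH)
  also have "\<dots> = c * ennreal (?r ^ Suc t)"
    using r0 by (simp add: ennreal_mult'[symmetric] mult_ac)
  finally show ?case .
qed



lemma filter_upt_image:
  fixes P :: "nat \<Rightarrow> bool"
  assumes k: "k < length (filter P [0..<L])"
  shows "(\<lambda>j. filter P [0..<L] ! j) ` {k..<length (filter P [0..<L])} = {i \<in> {filter P [0..<L] ! k..<L}. P i}"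
    and "inj_on (\<lambda>j. filter P [0..<L] ! j) {k..<length (filter P [0..<L])}"
    and "k = 0 \<Longrightarrow> {i \<in> {filter P [0..<L] ! k..<L}. P i} = {i \<in> {0..<L}. P i}"
proof -
  let ?I = "filter P [0..<L]"
  have srt: "sorted_wrt (<) ?I" by (intro sorted_wrt_filter sorted_wrt_upt)
  have lt: "\<And>i j. i < j \<Longrightarrow> j < length ?I \<Longrightarrow> ?I ! i < ?I ! j"
    using sorted_wrt_nth_less[OF srt] by blast
  have le: "\<And>i j. i \<le> j \<Longrightarrow> j < length ?I \<Longrightarrow> ?I ! i \<le> ?I ! j"
    using lt by (metis le_less)
  have mem: "\<And>j. j < length ?I \<Longrightarrow> ?I ! j < L \<and> P (?I ! j)"
    using nth_mem by (metis (no_types, lifting) atLeastLessThan_iff mem_Collect_eq set_filter set_upt)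
  show "(\<lambda>j. ?I ! j) ` {k..<length ?I} = {i \<in> {?I ! k..<L}. P i}"
  proof
    show "(\<lambda>j. ?I ! j) ` {k..<length ?I} \<subseteq> {i \<in> {?I ! k..<L}. P i}"
      using mem le by auto
    show "{i \<in> {?I ! k..<L}. P i} \<subseteq> (\<lambda>j. ?I ! j) ` {k..<length ?I}"
    proof
      fix i assume i: "i \<in> {i \<in> {?I ! k..<L}. P i}"
      then have "i \<in> set ?I" by auto
      then obtain j where j: "j < length ?I" "?I ! j = i" by (metis in_set_conv_nth)
      have "k \<le> j"
      proof (rule ccontr)
        assume "\<not> k \<le> j"
        then have "?I ! j < ?I ! k" using lt k by simp
        then show False using i j by auto
      qed
      then show "i \<in> (\<lambda>j. ?I ! j) ` {k..<length ?I}" using j by auto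
    qed
  qed
  show "inj_on (\<lambda>j. ?I ! j) {k..<length ?I}"
    unfolding inj_on_def by (metis atLeastLessThan_iff lt less_irrefl nat_neq_iff)
  show "k = 0 \<Longrightarrow> {i \<in> {?I ! k..<L}. P i} = {i \<in> {0..<L}. P i}"
  proof -
    assume k0: "k = 0"
    have "\<And>i. i < L \<Longrightarrow> P i \<Longrightarrow> ?I ! 0 \<le> i"
    proof -
      fix i assume "i < L" "P i"
      then have "i \<in> set ?I" by auto
      then obtain j where j: "j < length ?I" "?I ! j = i" by (metis in_set_conv_nth)
      then show "?I ! 0 \<le> i" using le[of 0 j] by simp
    qed
    then show ?thesis using k0 by auto
  qed
qed

lemma obs_snd: "map snd (obs h m) = map (\<lambda>i. snd (h ! i)) (filter (\<lambda>i. fst (h ! i) = m) [0..<length h])"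
  unfolding obs_def by simp

lemma length_obs: "length (obs h m) = card {i \<in> {0..<length h}. fst (h ! i) = m}"
proof -
  have "length (obs h m) = length (filter (\<lambda>i. fst (h ! i) = m) [0..<length h])"
    unfolding obs_def by simp
  also have "\<dots> = card (set (filter (\<lambda>i. fst (h ! i) = m) [0..<length h]))"
    by (rule distinct_card[symmetric]) simp
  also have "set (filter (\<lambda>i. fst (h ! i) = m) [0..<length h]) = {i \<in> {0..<length h}. fst (h ! i) = m}"
    by auto
  finally show ?thesis .
qed

lemma glr_window:
  assumes k: "k < length (obs h m)"
  shows "\<exists>a<length h. glr h m k = (\<Sum>i\<in>{i \<in> {a..<length h}. fst (h ! i) = m}. snd (h ! i))\<^sup>2
            / (2 * real (card {i \<in> {a..<length h}. fst (h ! i) = m}))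
       \<and> card {i \<in> {a..<length h}. fst (h ! i) = m} = length (obs h m) - k
       \<and> (k = 0 \<longrightarrow> {i \<in> {a..<length h}. fst (h ! i) = m} = {i \<in> {0..<length h}. fst (h ! i) = m})"
proof -
  let ?P = "\<lambda>i. fst (h ! i) = m"
  let ?I = "filter ?P [0..<length h]"
  have lI: "length (obs h m) = length ?I" unfolding obs_def by simp
  have kI: "k < length ?I" using k lI by simp
  note fi = filter_upt_image[OF kI]
  let ?a = "?I ! k"
  have a: "?a < length h" using nth_mem[OF kI] by auto
  have xs: "map snd (obs h m) = map (\<lambda>i. snd (h ! i)) ?I" by (rule obs_snd)
  have "(\<Sum>j\<in>{k..<length (obs h m)}. map snd (obs h m) ! j) = (\<Sum>j\<in>{k..<length ?I}. snd (h ! (?I ! j)))"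
    using lI xs by (intro sum.cong) auto
  also have "\<dots> = (\<Sum>i\<in>(\<lambda>j. ?I ! j) ` {k..<length ?I}. snd (h ! i))"
    by (rule sum.reindex[OF fi(2), symmetric, unfolded comp_def])
  also have "\<dots> = (\<Sum>i\<in>{i \<in> {?a..<length h}. ?P i}. snd (h ! i))"
    unfolding fi(1) ..
  finally have s: "(\<Sum>j\<in>{k..<length (obs h m)}. map snd (obs h m) ! j) = (\<Sum>i\<in>{i \<in> {?a..<length h}. ?P i}. snd (h ! i))" .
  have "card {i \<in> {?a..<length h}. ?P i} = card {k..<length ?I}"
    unfolding fi(1)[symmetric] by (rule card_image[OF fi(2)])
  then have c: "card {i \<in> {?a..<length h}. ?P i} = length (obs h m) - k" using lI by simp
  have g: "glr h m k = (\<Sum>i\<in>{i \<in> {?a..<length h}. ?P i}. snd (h ! i))\<^sup>2 / (2 * real (card {i \<in> {?a..<length h}. ?P i}))"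
    unfolding glr_def Let_def length_map s c by (simp add: of_nat_diff)
  show ?thesis using a g c fi(3) by blast
qed

lemma Tstat_ge: "k < length (obs h m) \<Longrightarrow> glr h m k \<le> Tstat h m"
  unfolding Tstat_def by auto

lemma Tstat_pos: "0 < x \<Longrightarrow> x \<le> Tstat h m \<Longrightarrow> \<exists>k<length (obs h m). x \<le> glr h m k"
proof -
  assume x: "0 < x" "x \<le> Tstat h m"
  then have ne: "obs h m \<noteq> []" unfolding Tstat_def by auto
  then have "Tstat h m \<in> glr h m ` {..<length (obs h m)}"
    unfolding Tstat_def by (auto intro!: Max_in)
  then show ?thesis using x by auto
qed

definition Sset :: "nat \<Rightarrow> real \<Rightarrow> (nat \<Rightarrow> sample) \<Rightarrow> nat \<Rightarrow> nat \<Rightarrow> nat \<Rightarrow> nat set" where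
  "Sset M mu w t m a = {i \<in> {a..<t}. fst (hist M mu 0 w t ! i) = m}"

lemma Dm_sum: "(\<Sum>i\<in>{a..<t}. Dm M mu m th i w) =
   th * (\<Sum>i\<in>Sset M mu w t m a. fst (w (Suc i))) - th\<^sup>2 / 2 * real (card (Sset M mu w t m a))"
proof -
  have "(\<Sum>i\<in>{a..<t}. Dm M mu m th i w) = (\<Sum>i\<in>{a..<t}. if fst (hist M mu 0 w t ! i) = m then th * fst (w (Suc i)) - th\<^sup>2 / 2 else 0)"
    by (rule sum.cong) (auto simp: Dm_def hist_nth[of _ t])
  also have "\<dots> = (\<Sum>i\<in>Sset M mu w t m a. th * fst (w (Suc i)) - th\<^sup>2 / 2)"
    unfolding Sset_def by (rule sum.inter_filter[symmetric]) simp
  also have "\<dots> = th * (\<Sum>i\<in>Sset M mu w t m a. fst (w (Suc i))) - th\<^sup>2 / 2 * real (card (Sset M mu w t m a))"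
    by (simp add: sum_subtractf sum_distrib_left)
  finally show ?thesis .
qed

definition Theta :: "real \<Rightarrow> real \<Rightarrow> nat \<Rightarrow> real set" where
  "Theta mu x t = {\<bar>mu\<bar>/2, - \<bar>mu\<bar>/2} \<union> (\<lambda>l. sqrt (2 * x / real l)) ` {1..t} \<union> (\<lambda>l. - sqrt (2 * x / real l)) ` {1..t}"

definition Jset :: "nat \<Rightarrow> real \<Rightarrow> real \<Rightarrow> nat \<Rightarrow> (nat \<times> nat \<times> real) set" where
  "Jset M mu x t = {1..M} \<times> {..<t} \<times> Theta mu x t"

lemma Jset_finite: "finite (Jset M mu x t)"
  unfolding Jset_def Theta_def by auto

lemma Jset_card: "card (Jset M mu x t) \<le> M * t * (2 + 2 * t)"
proof -
  have "card (Theta mu x t) \<le> 2 + t + t"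
  proof -
    have "card (Theta mu x t) \<le> card {\<bar>mu\<bar>/2, - \<bar>mu\<bar>/2} + card ((\<lambda>l. sqrt (2 * x / real l)) ` {1..t}) + card ((\<lambda>l. - sqrt (2 * x / real l)) ` {1..t})"
      unfolding Theta_def using card_Un_le[of "{\<bar>mu\<bar>/2, - \<bar>mu\<bar>/2} \<union> (\<lambda>l. sqrt (2 * x / real l)) ` {1..t}" "(\<lambda>l. - sqrt (2 * x / real l)) ` {1..t}"]
        card_Un_le[of "{\<bar>mu\<bar>/2, - \<bar>mu\<bar>/2}" "(\<lambda>l. sqrt (2 * x / real l)) ` {1..t}"] by linarith
    also have "\<dots> \<le> 2 + t + t"
    proof (intro add_le_mono)
      show "card {\<bar>mu\<bar>/2, - \<bar>mu\<bar>/2} \<le> 2" by (simp add: card_insert_if)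
      show "card ((\<lambda>l. sqrt (2 * x / real l)) ` {1..t}) \<le> t"
        using card_image_le[of "{1..t}" "\<lambda>l. sqrt (2 * x / real l)"] by simp
      show "card ((\<lambda>l. - sqrt (2 * x / real l)) ` {1..t}) \<le> t"
        using card_image_le[of "{1..t}" "\<lambda>l. - sqrt (2 * x / real l)"] by simp
    qed
    finally show ?thesis .
  qed
  then have "M * t * card (Theta mu x t) \<le> M * t * (2 + 2 * t)" by (intro mult_le_mono2) simp
  then show ?thesis unfolding Jset_def by (simp add: card_cartesian_product mult.assoc)
qed

lemma abs_sqrt_sq: "\<bar>S\<bar> = sqrt (S\<^sup>2)" by simp

lemma key:
  assumes M: "M > 1" and t: "t \<ge> 1" and l0: "l0 > 0" and mu: "mu \<noteq> 0"
    and x: "x = mu\<^sup>2 * l0 / 8"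
    and H: "Max (Tstat (hist M mu 0 w t) ` {2..M}) \<ge> Tstat (hist M mu 0 w t) 1"
    and Cn: "real (Cnt q M t w) \<ge> l0" and q: "q = min 1 (real M / real t powr (1/3))"
  shows "\<exists>j\<in>Jset M mu x t. x \<le> (\<Sum>i\<in>{fst (snd j)..<t}. Dm M mu (fst j) (snd (snd j)) i w)"
proof -
  let ?h = "hist M mu 0 w t"
  have lh: "length ?h = t" by simp
  have x0: "0 < x" unfolding x using l0 mu by (intro divide_pos_pos mult_pos_pos) auto
  define S1set where "S1set = Sset M mu w t 1 0"
  define N1 where "N1 = card S1set"
  define S1 where "S1 = (\<Sum>i\<in>S1set. fst (w (Suc i)))"
  have S1set_eq: "S1set = {i \<in> {0..<length ?h}. fst (?h ! i) = 1}"
    unfolding S1set_def Sset_def by simp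
  have sub: "{i. i < t \<and> Bq q M (w (Suc i))} \<subseteq> S1set"
  proof
    fix i assume i: "i \<in> {i. i < t \<and> Bq q M (w (Suc i))}"
    then have "fst (?h ! i) = armsel M mu w i (fst (snd (w (Suc i)))) (fst (snd (snd (w (Suc i)))))"
      by (simp add: hist_nth[of i t] hist_last_fst)
    also have "\<dots> = 1"
      using i M unfolding Bq_def q by (intro armsel_explore[where T=t]) auto
    finally show "i \<in> S1set" using i unfolding S1set_def Sset_def by auto
  qed
  have "Cnt q M t w \<le> N1" unfolding Cnt_def N1_def
    by (rule card_mono[OF _ sub]) (simp add: S1set_def Sset_def)
  then have N1l: "l0 \<le> real N1" using Cn by linarith
  then have N1pos: "0 < N1" using l0 by simp
  have xN: "x \<le> mu\<^sup>2 * real N1 / 8" unfolding x using N1l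
    by (intro divide_right_mono mult_left_mono) auto
  show ?thesis
  proof (cases "\<bar>mu\<bar> * real N1 / 2 \<le> \<bar>S1\<bar>")
    case True
    define th where "th = (if S1 \<ge> 0 then \<bar>mu\<bar>/2 else - \<bar>mu\<bar>/2)"
    have thS: "th * S1 = \<bar>mu\<bar> / 2 * \<bar>S1\<bar>" unfolding th_def by auto
    have th2: "th\<^sup>2 = mu\<^sup>2 / 4" unfolding th_def by (auto simp: power2_eq_square)
    have jJ: "(1, 0, th) \<in> Jset M mu x t" unfolding Jset_def Theta_def th_def using M t by auto
    have "\<bar>mu\<bar> / 2 * (\<bar>mu\<bar> * real N1 / 2) \<le> \<bar>mu\<bar> / 2 * \<bar>S1\<bar>"
      using True by (intro mult_left_mono) auto
    then have "mu\<^sup>2 * real N1 / 4 \<le> th * S1" unfolding thS by (simp add: power2_eq_square field_simps)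
    then have "x \<le> th * S1 - th\<^sup>2 / 2 * real N1" using xN unfolding th2 by (simp add: field_simps)
    then show ?thesis using jJ unfolding Dm_sum by (intro bexI[of _ "(1, 0, th)"]) (simp_all add: S1_def N1_def S1set_def)
  next
    case False
    have snd1: "\<And>i. i \<in> S1set \<Longrightarrow> snd (?h ! i) = fst (w (Suc i)) + mu"
      unfolding S1set_def Sset_def by (auto simp: hist_nth_snd)
    have "length (obs ?h 1) = N1" unfolding N1_def S1set_eq length_obs ..
    then have k0: "0 < length (obs ?h 1)" using N1pos by simp
    obtain a where a: "a < length ?h" and g: "glr ?h 1 0 = (\<Sum>i\<in>{i \<in> {a..<length ?h}. fst (?h ! i) = 1}. snd (?h ! i))\<^sup>2
            / (2 * real (card {i \<in> {a..<length ?h}. fst (?h ! i) = 1}))"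
       and ge: "{i \<in> {a..<length ?h}. fst (?h ! i) = 1} = {i \<in> {0..<length ?h}. fst (?h ! i) = 1}"
      using glr_window[OF k0] by blast
    have "(\<Sum>i\<in>S1set. snd (?h ! i)) = S1 + mu * real N1"
      unfolding S1_def N1_def by (simp add: snd1 sum.distrib)
    then have g1: "glr ?h 1 0 = (S1 + mu * real N1)\<^sup>2 / (2 * real N1)"
      unfolding g ge S1set_eq[symmetric] N1_def by simp
    have "\<bar>mu\<bar> * real N1 / 2 \<le> \<bar>S1 + mu * real N1\<bar>"
    proof -
      have tri: "\<bar>mu * real N1\<bar> \<le> \<bar>S1 + mu * real N1\<bar> + \<bar>S1\<bar>"
        using abs_triangle_ineq[of "S1 + mu * real N1" "- S1"] by simp
      have "\<bar>mu * real N1\<bar> = \<bar>mu\<bar> * real N1" by (simp add: abs_mult)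
      then show ?thesis using tri False by linarith
    qed
    note pm = power_mono[OF this, of 2]
    have "(\<bar>mu\<bar> * real N1 / 2)\<^sup>2 \<le> (S1 + mu * real N1)\<^sup>2"
      using pm by simp
    then have "mu\<^sup>2 * real N1 / 8 \<le> (S1 + mu * real N1)\<^sup>2 / (2 * real N1)"
      using N1pos by (simp add: power2_eq_square field_simps)
    then have "x \<le> Tstat ?h 1" using xN g1 Tstat_ge[OF k0] by linarith
    then have "x \<le> Max (Tstat ?h ` {2..M})" using H by linarith
    moreover have "Max (Tstat ?h ` {2..M}) \<in> Tstat ?h ` {2..M}"
      using M by (intro Max_in) auto
    ultimately obtain m where m: "m \<in> {2..M}" and xm: "x \<le> Tstat ?h m" by auto
    obtain k where k: "k < length (obs ?h m)" and xk: "x \<le> glr ?h m k"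
      using Tstat_pos[OF x0 xm] by blast
    obtain a where a: "a < length ?h" and g: "glr ?h m k = (\<Sum>i\<in>{i \<in> {a..<length ?h}. fst (?h ! i) = m}. snd (?h ! i))\<^sup>2
            / (2 * real (card {i \<in> {a..<length ?h}. fst (?h ! i) = m}))"
       and c: "card {i \<in> {a..<length ?h}. fst (?h ! i) = m} = length (obs ?h m) - k"
      using glr_window[OF k] by blast
    define L where "L = card (Sset M mu w t m a)"
    define S where "S = (\<Sum>i\<in>Sset M mu w t m a. fst (w (Suc i)))"
    have Ls: "Sset M mu w t m a = {i \<in> {a..<length ?h}. fst (?h ! i) = m}" unfolding Sset_def by simp
    have L1: "1 \<le> L" unfolding L_def Ls c using k by simp
    have Lt: "L \<le> t" unfolding L_def Sset_def
      by (rule order_trans[OF card_mono[of "{a..<t}"]]) auto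
    have sndm: "\<And>i. i \<in> Sset M mu w t m a \<Longrightarrow> snd (?h ! i) = fst (w (Suc i))"
      using m unfolding Sset_def by (auto simp: hist_nth_snd)
    have gS: "glr ?h m k = S\<^sup>2 / (2 * real L)"
      unfolding g Ls[symmetric] L_def S_def using sndm by simp
    have "x * (2 * real L) \<le> glr ?h m k * (2 * real L)" using mult_right_mono[OF xk, of "2 * real L"] by simp
    also have "\<dots> = S\<^sup>2" unfolding gS using L1 by simp
    finally have SL: "2 * x * real L \<le> S\<^sup>2" by (simp add: mult_ac)
    define th where "th = (if S \<ge> 0 then sqrt (2 * x / real L) else - sqrt (2 * x / real L))"
    have jJ: "(m, a, th) \<in> Jset M mu x t"
      unfolding Jset_def Theta_def th_def using m a L1 Lt by auto
    have thS: "th * S = sqrt (2 * x / real L) * \<bar>S\<bar>" unfolding th_def by auto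
    have "th\<^sup>2 = 2 * x / real L" unfolding th_def using x0 L1 by (simp add: real_sqrt_pow2)
    then have th2: "th\<^sup>2 / 2 * real L = x" using L1 by simp
    have "sqrt (2 * x * real L) \<le> \<bar>S\<bar>" using real_sqrt_le_mono[OF SL] by simp
    then have "sqrt (2 * x / real L) * sqrt (2 * x * real L) \<le> sqrt (2 * x / real L) * \<bar>S\<bar>"
      using x0 by (intro mult_left_mono) auto
    moreover have "sqrt (2 * x / real L) * sqrt (2 * x * real L) = 2 * x"
    proof -
      have "sqrt (2 * x / real L) * sqrt (2 * x * real L) = sqrt ((2 * x)\<^sup>2)"
        using L1 by (simp add: real_sqrt_mult[symmetric] power2_eq_square)
      then show ?thesis using x0 real_sqrt_abs[of "2 * x"] by simp
    qed
    ultimately have "x \<le> th * S - th\<^sup>2 / 2 * real L" using thS th2 by linarith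
    then show ?thesis using jJ unfolding Dm_sum by (intro bexI[of _ "(m, a, th)"]) (simp_all add: S_def L_def)
  qed
qed



lemma meas_bound:
  assumes A: "A \<in> sets FOCuS_space" and ind: "\<And>w. w \<in> A \<Longrightarrow> 1 \<le> g w"
    and d: "dep k g" and E: "Eit k g \<le> ennreal b" and b: "0 \<le> b"
  shows "measure FOCuS_space A \<le> b"
proof -
  have "emeasure FOCuS_space A = (\<integral>\<^sup>+ w. indicator A w \<partial>FOCuS_space)"
    using A by simp
  also have "\<dots> \<le> (\<integral>\<^sup>+ w. g w \<partial>FOCuS_space)"
    by (intro nn_integral_mono) (auto simp: indicator_def ind)
  also have "\<dots> \<le> Eit k g" by (rule FOCuS_le_Eit[OF d])
  also have "\<dots> \<le> ennreal b" by (rule E)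
  finally have "emeasure FOCuS_space A \<le> ennreal b" .
  then have "enn2real (emeasure FOCuS_space A) \<le> enn2real (ennreal b)"
    by (rule enn2real_mono) simp
  then show ?thesis using b by (simp add: measure_def)
qed

lemma Cnt_meas: "(\<lambda>w. real (Cnt q M t w)) \<in> borel_measurable FOCuS_space"
proof -
  have pB: "Measurable.pred sample_measure (Bq q M)"
    using Bq_pred by (simp add: pred_def)
  have c: "\<And>i. (\<lambda>w. w (Suc i)) \<in> measurable FOCuS_space sample_measure"
    unfolding FOCuS_space_def by (rule measurable_component_singleton) simp
  have p: "\<And>i. Measurable.pred FOCuS_space (\<lambda>w. Bq q M (w (Suc i)))"
    by (rule measurable_compose[OF c pB])
  have eq: "(\<lambda>w. real (Cnt q M t w)) = (\<lambda>w. \<Sum>i\<in>{..<t}. if Bq q M (w (Suc i)) then 1 else 0)"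
  proof
    fix w
    have "Cnt q M t w = card {i \<in> {..<t}. Bq q M (w (Suc i))}" unfolding Cnt_def by simp
    also have "\<dots> = (\<Sum>i\<in>{i \<in> {..<t}. Bq q M (w (Suc i))}. 1)" by simp
    also have "\<dots> = (\<Sum>i\<in>{..<t}. if Bq q M (w (Suc i)) then 1 else 0)"
      by (rule sum.inter_filter) simp
    finally show "real (Cnt q M t w) = (\<Sum>i\<in>{..<t}. if Bq q M (w (Suc i)) then 1 else 0)"
      by (simp add: of_nat_sum if_distrib[of real] cong: if_cong)
  qed
  have ps: "\<And>i. {x \<in> space FOCuS_space. Bq q M (x (Suc i))} \<in> sets FOCuS_space"
    using p by (simp add: pred_def)
  show ?thesis unfolding eq
    by (intro borel_measurable_sum measurable_If) (auto simp: ps)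
qed

definition Hset :: "nat \<Rightarrow> real \<Rightarrow> nat \<Rightarrow> (nat \<Rightarrow> sample) set" where
  "Hset M mu t = {w \<in> space FOCuS_space.
              Max (Tstat (hist M mu 0 w t) ` {2..M}) \<ge> Tstat (hist M mu 0 w t) 1}"

lemma bound_t:
  assumes M: "M > 1" and mu: "mu \<noteq> 0" and t: "t \<ge> 1"
    and q: "q = min 1 (real M / real t powr (1/3))"
    and l0: "l0 = real t * q / (4 * real M)" and x: "x = mu\<^sup>2 * l0 / 8"
  shows "measure FOCuS_space (Hset M mu t) \<le> 2 powr l0 * (1 - q / (2 * real M)) ^ t + real (M * t * (2 + 2 * t)) * exp (- x)"
proof (cases "Hset M mu t \<in> sets FOCuS_space")
  case False
  have "0 \<le> 1 - q / (2 * real M)" using M q by (auto simp: field_simps min_def)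
  then have "0 \<le> 2 powr l0 * (1 - q / (2 * real M)) ^ t + real (M * t * (2 + 2 * t)) * exp (- x)"
    by simp
  then show ?thesis using False by (simp add: measure_notin_sets)
next
  case True
  let ?H = "Hset M mu t"
  let ?B = "{w \<in> space FOCuS_space. real (Cnt q M t w) < l0}"
  have q0: "0 < q" "q \<le> 1" using M t q by auto
  have l00: "0 < l0" unfolding l0 using q0 t M by simp
  have M1: "M \<ge> 1" using M by simp
  have Bs: "?B \<in> sets FOCuS_space"
  proof -
    have "(\<lambda>w. real (Cnt q M t w)) -` {..<l0} \<inter> space FOCuS_space \<in> sets FOCuS_space"
      by (rule measurable_sets[OF Cnt_meas]) simp
    moreover have "(\<lambda>w. real (Cnt q M t w)) -` {..<l0} \<inter> space FOCuS_space = ?B" by auto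
    ultimately show ?thesis by simp
  qed
  have HB: "?H - ?B \<in> sets FOCuS_space" using True Bs by auto
  have fm: "finite_measure FOCuS_space" using FOCuS_prob by (simp add: prob_space_def)
  let ?rb = "2 powr l0 * (1 - q / (2 * real M)) ^ t"
  have r0: "0 \<le> 1 - q / (2 * real M)" using q0 M by (simp add: field_simps)
  have mB: "measure FOCuS_space ?B \<le> ?rb"
  proof (rule meas_bound[OF Bs, where k = "Suc t" and g = "\<lambda>w. ennreal (2 powr l0) * ennreal ((1/2) ^ Cnt q M t w)"])
    fix w assume "w \<in> ?B"
    then have lt: "real (Cnt q M t w) < l0" by simp
    have "(2::real) ^ Cnt q M t w = 2 powr real (Cnt q M t w)"
      by (simp add: powr_realpow)
    also have "\<dots> \<le> 2 powr l0" using lt by (intro powr_mono) auto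
    finally have p2: "(2::real) ^ Cnt q M t w \<le> 2 powr l0" .
    have "1 \<le> 2 powr l0 * (1/2) ^ Cnt q M t w"
      using p2 by (simp add: power_one_over field_simps)
    then have "ennreal 1 \<le> ennreal (2 powr l0 * (1/2) ^ Cnt q M t w)"
      by (rule ennreal_leI)
    then show "1 \<le> ennreal (2 powr l0) * ennreal ((1/2) ^ Cnt q M t w)"
      by (simp add: ennreal_mult)
  next
    show "dep (Suc t) (\<lambda>w. ennreal (2 powr l0) * ennreal ((1/2) ^ Cnt q M t w))"
      unfolding dep_def
    proof (intro allI impI)
      fix w w' :: "nat \<Rightarrow> sample" assume a: "\<forall>i<Suc t. w i = w' i"
      have "Cnt q M t w = Cnt q M t w'" using Cnt_dep[of t q M] a unfolding dep_def by blast
      then show "ennreal (2 powr l0) * ennreal ((1/2) ^ Cnt q M t w) = ennreal (2 powr l0) * ennreal ((1/2) ^ Cnt q M t w')"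
        by simp
    qed
  next
    have "Eit (Suc t) (\<lambda>w. ennreal (2 powr l0) * ennreal ((1/2) ^ Cnt q M t w))
       \<le> ennreal (2 powr l0) * ennreal ((1 - q / (2 * real M)) ^ t)"
      by (rule bern_mart[OF less_imp_le[OF q0(1)] q0(2) M1])
    also have "\<dots> = ennreal ?rb" using r0 by (simp add: ennreal_mult)
    finally show "Eit (Suc t) (\<lambda>w. ennreal (2 powr l0) * ennreal ((1/2) ^ Cnt q M t w)) \<le> ennreal ?rb" .
  next
    show "0 \<le> ?rb" using r0 by simp
  qed
  let ?J = "Jset M mu x t"
  have mH: "measure FOCuS_space (?H - ?B) \<le> real (card ?J) * exp (- x)"
  proof (rule meas_bound[OF HB, where k = "Suc t" and g = "\<lambda>w. \<Sum>j\<in>?J. ennreal (exp (- x)) * Fj M mu j t w"])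
    fix w assume w: "w \<in> ?H - ?B"
    have "\<exists>j\<in>?J. x \<le> (\<Sum>i\<in>{fst (snd j)..<t}. Dm M mu (fst j) (snd (snd j)) i w)"
    proof (rule key[OF M t l00 mu x _ _ q])
      have wH: "w \<in> space FOCuS_space" using w unfolding Hset_def by blast
      show "Max (Tstat (hist M mu 0 w t) ` {2..M}) \<ge> Tstat (hist M mu 0 w t) 1"
        using w unfolding Hset_def by blast
      show "l0 \<le> real (Cnt q M t w)" using w wH by (simp add: not_less)
    qed
    then obtain j where j: "j \<in> ?J" and xj: "x \<le> (\<Sum>i\<in>{fst (snd j)..<t}. Dm M mu (fst j) (snd (snd j)) i w)"
      by blast
    have "1 \<le> exp (- x) * exp (\<Sum>i\<in>{fst (snd j)..<t}. Dm M mu (fst j) (snd (snd j)) i w)"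
      using xj by (simp add: exp_add[symmetric])
    then have "1 \<le> ennreal (exp (- x)) * Fj M mu j t w"
      unfolding Fj_def by (simp add: ennreal_mult[symmetric])
    also have "\<dots> \<le> (\<Sum>j\<in>?J. ennreal (exp (- x)) * Fj M mu j t w)"
      by (rule member_le_sum[OF j]) (auto simp: Jset_finite)
    finally show "1 \<le> (\<Sum>j\<in>?J. ennreal (exp (- x)) * Fj M mu j t w)" .
  next
    show "dep (Suc t) (\<lambda>w. \<Sum>j\<in>?J. ennreal (exp (- x)) * Fj M mu j t w)"
      unfolding dep_def
    proof (intro allI impI)
      fix w w' :: "nat \<Rightarrow> sample" assume a: "\<forall>i<Suc t. w i = w' i"
      have "\<And>j. Fj M mu j t w = Fj M mu j t w'"
        using Fj_dep a unfolding dep_def by blast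
      then show "(\<Sum>j\<in>?J. ennreal (exp (- x)) * Fj M mu j t w) = (\<Sum>j\<in>?J. ennreal (exp (- x)) * Fj M mu j t w')"
        by simp
    qed
  next
    have "Eit (Suc t) (\<lambda>w. \<Sum>j\<in>?J. ennreal (exp (- x)) * Fj M mu j t w) \<le> (\<Sum>j\<in>?J. ennreal (exp (- x)))"
      by (rule mart[OF Jset_finite])
    also have "\<dots> = ennreal (real (card ?J) * exp (- x))"
      by (simp add: ennreal_mult ennreal_of_nat_eq_real_of_nat)
    finally show "Eit (Suc t) (\<lambda>w. \<Sum>j\<in>?J. ennreal (exp (- x)) * Fj M mu j t w) \<le> ennreal (real (card ?J) * exp (- x))" .
  next
    show "0 \<le> real (card ?J) * exp (- x)" by simp
  qed
  have "measure FOCuS_space ?H \<le> measure FOCuS_space ((?H - ?B) \<union> ?B)"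
    using HB Bs fm True by (intro finite_measure.finite_measure_mono) auto
  also have "\<dots> \<le> measure FOCuS_space (?H - ?B) + measure FOCuS_space ?B"
    using HB Bs by (intro measure_Un_le) auto
  also have "\<dots> \<le> real (card ?J) * exp (- x) + ?rb" using mH mB by simp
  also have "real (card ?J) * exp (- x) \<le> real (M * t * (2 + 2 * t)) * exp (- x)"
  proof (rule mult_right_mono)
    show "real (card ?J) \<le> real (M * t * (2 + 2 * t))"
      using Jset_card[of M mu x t] by (simp only: of_nat_le_iff)
  qed simp
  finally show ?thesis by simp
qed



lemma first_term:
  assumes q: "0 \<le> q" "q \<le> 1" and M: "M \<ge> 1" and l0: "l0 = real t * q / (4 * real M)"
  shows "2 powr l0 * (1 - q / (2 * real M)) ^ t \<le> exp (- l0)"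
proof -
  have l00: "0 \<le> l0" unfolding l0 using q M by simp
  have "ln (2::real) \<le> 1" using ln_le_minus_one[of 2] by simp
  then have "l0 * ln 2 \<le> l0" using l00 by (simp add: mult_left_le)
  then have e1: "2 powr l0 \<le> exp l0" by (simp add: powr_def)
  let ?a = "q / (2 * real M)"
  have a0: "0 \<le> 1 - ?a" using q M by (simp add: field_simps)
  have "(1 - ?a) ^ t \<le> exp (- ?a) ^ t"
    using exp_ge_add_one_self[of "- ?a"] a0 by (intro power_mono) auto
  also have "\<dots> = exp (real t * (- ?a))" by (rule exp_of_nat_mult[symmetric])
  also have "real t * (- ?a) = - 2 * l0" unfolding l0 using M by (simp add: field_simps)
  finally have e2: "(1 - ?a) ^ t \<le> exp (- 2 * l0)" .
  have "2 powr l0 * (1 - ?a) ^ t \<le> exp l0 * exp (- 2 * l0)"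
    using e1 e2 a0 by (intro mult_mono) auto
  also have "\<dots> = exp (- l0)" by (simp add: exp_add[symmetric])
  finally show ?thesis .
qed

lemma exp_ge_pow6: "0 \<le> (z::real) \<Longrightarrow> (z / 6) ^ 6 \<le> exp z"
proof -
  assume z: "0 \<le> z"
  have "(z / 6) ^ 6 \<le> (1 + z / real (6::nat)) ^ 6"
    using z by (intro power_mono) auto
  also have "\<dots> \<le> exp z" using z by (intro exp_ge_one_plus_x_over_n_power_n) auto
  finally show ?thesis .
qed

lemma cube_root:
  assumes "0 < T" shows "(T powr (1/3)) ^ 3 = (T::real)"
proof -
  have "(T powr (1/3)) ^ 3 = (T powr (1/3)) powr (real 3)"
    using assms by (subst powr_realpow) auto
  also have "\<dots> = T" using assms by (simp add: powr_powr)
  finally show ?thesis .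
qed

lemma tail_bound:
  assumes M: "M > 1" and mu: "mu \<noteq> 0" and t: "M ^ 3 \<le> t"
  defines "c \<equiv> min (1/4) (mu\<^sup>2 / 32)"
  shows "measure FOCuS_space (Hset M mu t) \<le> (5 * real M * 6 ^ 6 / c ^ 6) * inverse (real t ^ 2)"
proof -
  have M1: "1 \<le> M" using M by simp
  have t1: "1 \<le> t" using t M1 by (metis le_trans one_le_power)
  have tpos: "0 < real t" using t1 by simp
  let ?r = "real t powr (1/3)"
  have rpos: "0 < ?r" using tpos by simp
  have r3: "?r ^ 3 = real t" by (rule cube_root[OF tpos])
  have "real M ^ 3 \<le> ?r ^ 3" using t r3 by (metis of_nat_le_iff of_nat_power)
  note M3 = this
  have Mr: "real M \<le> ?r"
  proof (rule ccontr)
    assume "\<not> real M \<le> ?r"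
    then have "?r < real M" by simp
    then have "?r ^ 3 < real M ^ 3" using rpos by (intro power_strict_mono) auto
    then show False using M3 by simp
  qed
  define q where "q = min 1 (real M / ?r)"
  have qeq: "q = real M / ?r" unfolding q_def using Mr rpos by (simp add: min_def field_simps)
  have q01: "0 \<le> q" "q \<le> 1" unfolding q_def using rpos by auto
  define y where "y = real t / ?r"
  define l0 where "l0 = real t * q / (4 * real M)"
  have l0y: "l0 = y / 4" unfolding l0_def y_def qeq using M by (simp add: field_simps)
  have y0: "0 \<le> y" unfolding y_def using rpos tpos by simp
  have y3: "y ^ 3 = real t ^ 2"
  proof -
    have "y ^ 3 = real t ^ 3 / ?r ^ 3" unfolding y_def by (simp add: power_divide)
    also have "\<dots> = real t ^ 2" using r3 tpos by (simp add: power3_eq_cube power2_eq_square)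
    finally show ?thesis .
  qed
  define x where "x = mu\<^sup>2 * l0 / 8"
  have B: "measure FOCuS_space (Hset M mu t) \<le> 2 powr l0 * (1 - q / (2 * real M)) ^ t + real (M * t * (2 + 2 * t)) * exp (- x)"
    by (rule bound_t[OF M mu t1 q_def[unfolded] l0_def x_def])
  have f1: "2 powr l0 * (1 - q / (2 * real M)) ^ t \<le> exp (- l0)"
    by (rule first_term[OF q01 M1 l0_def])
  have c0: "0 < c" unfolding c_def using mu by simp
  have cl: "c * y \<le> l0" "c * y \<le> x"
  proof -
    have c1: "c \<le> 1/4" and c2: "c \<le> mu\<^sup>2 / 32" unfolding c_def by auto
    have "c * y \<le> 1/4 * y" "c * y \<le> mu\<^sup>2 / 32 * y"
      by (rule mult_right_mono[OF c1 y0]) (rule mult_right_mono[OF c2 y0])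
    then show "c * y \<le> l0" "c * y \<le> x" unfolding x_def l0y by (simp_all add: field_simps)
  qed
  have e1: "exp (- l0) \<le> exp (- (c * y))" using cl by simp
  have e2: "exp (- x) \<le> exp (- (c * y))" using cl by simp
  have "measure FOCuS_space (Hset M mu t) \<le> exp (- (c * y)) + real (M * t * (2 + 2 * t)) * exp (- (c * y))"
    using B f1 e2 by (meson add_mono e1 mult_left_mono of_nat_0_le_iff order_trans)
  also have "\<dots> = (1 + real (M * t * (2 + 2 * t))) * exp (- (c * y))" by (simp add: algebra_simps)
  also have "\<dots> \<le> (5 * real M * real t ^ 2) * exp (- (c * y))"
  proof (rule mult_right_mono)
    have "1 \<le> real t ^ 2" using t1 by (simp add: one_le_power)
    moreover have "1 \<le> real M" using M1 by simp
    ultimately have "1 * 1 \<le> real M * real t ^ 2" by (intro mult_mono) auto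
    then have "1 \<le> real M * real t ^ 2" by simp
    moreover have "real t \<le> real t ^ 2" using t1 by (simp add: power2_eq_square)
    then have "real M * real t \<le> real M * real t ^ 2" by (intro mult_left_mono) auto
    ultimately show "1 + real (M * t * (2 + 2 * t)) \<le> 5 * real M * real t ^ 2"
      by (simp add: algebra_simps power2_eq_square)
  qed simp
  also have "exp (- (c * y)) \<le> 6 ^ 6 / (c ^ 6 * real t ^ 4)"
  proof -
    have "(c * y / 6) ^ 6 \<le> exp (c * y)" using c0 y0 by (intro exp_ge_pow6) simp
    moreover have "(c * y / 6) ^ 6 = c ^ 6 * real t ^ 4 / 6 ^ 6"
    proof -
      have "y ^ 6 = (y ^ 3) ^ 2" by (simp add: power_mult[symmetric])
      then have "y ^ 6 = real t ^ 4" using y3 by (simp add: power_mult[symmetric])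
      then show ?thesis by (simp add: power_mult_distrib power_divide)
    qed
    ultimately have h: "c ^ 6 * real t ^ 4 / 6 ^ 6 \<le> exp (c * y)" by simp
    have pos: "0 < c ^ 6 * real t ^ 4" using c0 tpos by simp
    have "exp (- (c * y)) = 1 / exp (c * y)" by (simp add: exp_minus field_simps)
    also have "\<dots> \<le> 1 / (c ^ 6 * real t ^ 4 / 6 ^ 6)"
      using h pos by (intro divide_left_mono) auto
    also have "\<dots> = 6 ^ 6 / (c ^ 6 * real t ^ 4)" by simp
    finally show ?thesis .
  qed
  then have "(5 * real M * real t ^ 2) * exp (- (c * y)) \<le> (5 * real M * real t ^ 2) * (6 ^ 6 / (c ^ 6 * real t ^ 4))"
    by (intro mult_left_mono) auto
  also have "\<dots> = (5 * real M * 6 ^ 6 / c ^ 6) * inverse (real t ^ 2)"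
    using tpos c0 by (simp add: field_simps power2_eq_square power4_eq_xxxx)
  finally show ?thesis by simp
qed

theorem proposition1:
  fixes M :: nat and \<mu> lam :: real
  assumes "M > 1" and "lam > 0" and "\<mu> \<noteq> 0"
  shows "summable (\<lambda>t. measure FOCuS_space
           {\<omega> \<in> space FOCuS_space.
              Max (Tstat (hist M \<mu> 0 \<omega> t) ` {2..M}) \<ge> Tstat (hist M \<mu> 0 \<omega> t) 1})"
proof -
  define c where "c = min (1/4) (\<mu>\<^sup>2 / 32)"
  let ?K = "5 * real M * 6 ^ 6 / c ^ 6"
  have "summable (\<lambda>t. ?K * inverse (real t ^ 2))"
    by (intro summable_mult inverse_power_summable) simp
  then show ?thesis
  proof (rule summable_comparison_test'[where N = "M ^ 3"])
    fix t assume t: "M ^ 3 \<le> t"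
    have "measure FOCuS_space (Hset M \<mu> t) \<le> ?K * inverse (real t ^ 2)"
      using tail_bound[OF assms(1) assms(3) t] unfolding c_def .
    then show "norm (measure FOCuS_space
           {\<omega> \<in> space FOCuS_space.
              Max (Tstat (hist M \<mu> 0 \<omega> t) ` {2..M}) \<ge> Tstat (hist M \<mu> 0 \<omega> t) 1}) \<le> ?K * inverse (real t ^ 2)"
      by (simp add: Hset_def)
  qed
qed

end
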